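(* Let $H\in\mathcal K_r(n)$, and let $A,B$ be hyperedges of $H$ with $|A|\le n/2$ and $|B|\le n/2$. Then $A\cap B$ is a hyperedge of $H$.
   Context: $\mathcal K_r(n)$ is the class of hypergraphs on vertex set $V=[n]$ (identified with their hyperedge sets $\mathcal E$) satisfying: (R0) every $X\subseteq V$ with $|X|\le r$ is in $\mathcal E$; (R1) $A\in\mathcal E\Rightarrow V\setminus A\in\mathcal E$; (R2) $A,B\in\mathcal E$ and $|A\cap B|\ge r\Rightarrow A\cup B\in\mathcal E$. *)

theory Defs
  imports Main
begin

text \<open>A hypergraph on vertex set V = [n] = {1..n} is identified with its set of
hyperedges E, a family of subsets of V. K r n is the class of such hypergraphs
satisfying (R0), (R1), (R2).\<close>

definition K :: "nat \<Rightarrow> nat \<Rightarrow> nat set set set" where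
  "K r n = {E. E \<subseteq> Pow {1..n}
     \<and> (\<forall>X. X \<subseteq> {1..n} \<and> card X \<le> r \<longrightarrow> X \<in> E)
     \<and> (\<forall>A\<in>E. {1..n} - A \<in> E)
     \<and> (\<forall>A\<in>E. \<forall>B\<in>E. card (A \<inter> B) \<ge> r \<longrightarrow> A \<union> B \<in> E)}"

end

theory Submission
  imports Defs
begin

theorem mainTheorem9:
  fixes r n :: nat and H :: "nat set set" and A B :: "nat set"
  assumes "H \<in> K r n"
    and "A \<in> H" and "B \<in> H"
    and "2 * card A \<le> n" and "2 * card B \<le> n"
  shows "A \<inter> B \<in> H"
proof -
  let ?V = "{1..n::nat}"
  have sub: "H \<subseteq> Pow ?V" and R0: "\<And>X. X \<subseteq> ?V \<Longrightarrow> card X \<le> r \<Longrightarrow> X \<in> H"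
    and R1: "\<And>X. X \<in> H \<Longrightarrow> ?V - X \<in> H"
    and R2: "\<And>X Y. X \<in> H \<Longrightarrow> Y \<in> H \<Longrightarrow> card (X \<inter> Y) \<ge> r \<Longrightarrow> X \<union> Y \<in> H"
    using assms(1) unfolding K_def by auto
  have AV: "A \<subseteq> ?V" and BV: "B \<subseteq> ?V" using sub assms(2,3) by auto
  have fA: "finite A" and fB: "finite B" using AV BV finite_subset by blast+
  show ?thesis
  proof (cases "card (A \<inter> B) \<le> r")
    case True
    then show ?thesis using R0 AV by blast
  next
    case False
    have c1: "card (A \<union> B) + card (A \<inter> B) = card A + card B"
      using card_Un_Int[OF fA fB] by simp
    have eq: "(?V - A) \<inter> (?V - B) = ?V - (A \<union> B)" by blast
    have "card (?V - (A \<union> B)) = n - card (A \<union> B)"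
      using card_Diff_subset[of "A \<union> B" ?V] AV BV fA fB by auto
    hence "card ((?V - A) \<inter> (?V - B)) \<ge> r" using eq c1 False assms(4,5) by simp
    hence "(?V - A) \<union> (?V - B) \<in> H" using R2 R1 assms(2,3) by blast
    hence "?V - ((?V - A) \<union> (?V - B)) \<in> H" using R1 by blast
    moreover have "?V - ((?V - A) \<union> (?V - B)) = A \<inter> B" using AV BV by blast
    ultimately show ?thesis by simp
  qed
qed

end
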